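(* Let $W\in\mathcal W_0$, $w=\int_{[0,1]^2}W\,dxdy$ and $\ell(W)=W(1-W)$, and suppose $\int_{[0,1]^2}\ell(W)(x,y)\,dxdy\ne0$. For $\delta>0$ let $\xi=\xi(\delta)>0$ be the unique solution of $\int_{[0,1]^2}\frac{\xi W(x,y)}{1-W(x,y)+\xi W(x,y)}\,dxdy=w+\delta$, and set $W^\ast_\delta=\frac{W\xi}{1-W+W\xi}$. Then for sufficiently small $\delta>0$, $$W^\ast_\delta=W+\delta\,\frac{\ell(W)}{\int_{[0,1]^2}\ell(W)(x,y)\,dxdy}+O(\delta^2).$$
   Context: $\mathcal W_0$ is the set of symmetric measurable $W:[0,1]^2\to[0,1]$. $O(\delta^2)$ denotes a function on $[0,1]^2$ bounded in absolute value by $C\delta^2$ with $C$ independent of $\delta$ and $(x,y)$. *)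

theory Defs
  imports "HOL-Analysis.Analysis"
begin

definition unit_sq :: "(real \<times> real) set" where
  "unit_sq = {0..1} \<times> {0..1}"

definition sq_int :: "(real \<Rightarrow> real \<Rightarrow> real) \<Rightarrow> real" where
  "sq_int f = (LINT p : unit_sq | lebesgue. f (fst p) (snd p))"

text \<open>The set W_0: symmetric measurable functions [0,1]^2 -> [0,1]
  (values outside the unit square are irrelevant).\<close>
definition graphon :: "(real \<Rightarrow> real \<Rightarrow> real) \<Rightarrow> bool" where
  "graphon W \<longleftrightarrow>
     set_borel_measurable lebesgue unit_sq (\<lambda>p. W (fst p) (snd p)) \<and>
     (\<forall>x\<in>{0..1}. \<forall>y\<in>{0..1}. W x y = W y x) \<and>
     (\<forall>x\<in>{0..1}. \<forall>y\<in>{0..1}. 0 \<le> W x y \<and> W x y \<le> 1)"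

end

theory Submission
  imports Defs
begin

lemma unit_sq_sets: "unit_sq \<in> sets lebesgue"
proof -
  have "closed unit_sq" unfolding unit_sq_def by (intro closed_Times) auto
  then have "unit_sq \<in> sets lborel" by auto
  then show ?thesis by auto
qed

lemma unit_sq_fin: "emeasure lebesgue unit_sq < \<infinity>"
proof -
  have "closed unit_sq" unfolding unit_sq_def by (intro closed_Times) auto
  have "bounded unit_sq" unfolding unit_sq_def by (intro bounded_Times) auto
  have "unit_sq \<in> sets lborel" using \<open>closed unit_sq\<close> by auto
  then have "emeasure lebesgue unit_sq = emeasure lborel unit_sq" by (simp add: emeasure_completion)
  with emeasure_bounded_finite[OF \<open>bounded unit_sq\<close>] show ?thesis by simp
qed

lemma comp_integrable:
  fixes G :: "real \<Rightarrow> real"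
  assumes "graphon W" and G0: "G 0 = 0" and Gm: "G \<in> borel_measurable borel"
    and Gb: "\<And>y. 0 \<le> y \<Longrightarrow> y \<le> 1 \<Longrightarrow> \<bar>G y\<bar> \<le> B"
  shows "set_integrable lebesgue unit_sq (\<lambda>p. G (W (fst p) (snd p)))"
proof -
  let ?w = "\<lambda>p. indicator unit_sq p *\<^sub>R W (fst p) (snd p) :: real"
  have wm: "?w \<in> borel_measurable lebesgue"
    using assms(1) unfolding graphon_def set_borel_measurable_def by blast
  have eq: "(\<lambda>p. indicator unit_sq p *\<^sub>R G (W (fst p) (snd p))) = (\<lambda>p. G (?w p))"
    by (rule ext) (auto simp: G0 split: split_indicator)
  have m: "(\<lambda>p. G (?w p)) \<in> borel_measurable lebesgue"
    using measurable_compose[OF wm Gm] by (simp add: o_def)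
  have "integrable lebesgue (\<lambda>p. G (?w p))"
  proof (rule integrableI_bounded_set[where A=unit_sq and B=B])
    show "unit_sq \<in> sets lebesgue" by (rule unit_sq_sets)
    show "(\<lambda>p. G (?w p)) \<in> borel_measurable lebesgue" by (rule m)
    show "emeasure lebesgue unit_sq < \<infinity>" by (rule unit_sq_fin)
    show "AE x in lebesgue. x \<in> unit_sq \<longrightarrow> norm (G (?w x)) \<le> B"
      using assms(1) by (auto simp: graphon_def unit_sq_def intro!: Gb)
    show "AE x in lebesgue. x \<notin> unit_sq \<longrightarrow> G (?w x) = 0"
      by (auto simp: G0)
  qed
  then show ?thesis unfolding set_integrable_def eq .
qed

lemma pt_eq:
  fixes w t :: real assumes "0 \<le> w" "w \<le> 1" "t > -1"
  shows "(1+t) * w / (1 - w + (1+t) * w) - w = w*(1-w)*t/(1+w*t)"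
proof -
  have d: "1 - w + (1+t)*w = 1 + w*t" by (simp add: algebra_simps)
  have "1 + w*t > 0"
  proof (cases "t \<ge> 0")
    case True then show ?thesis using assms by (simp add: add_pos_nonneg)
  next
    case False
    then have "w*t \<ge> t" using assms by (simp add: mult_le_cancel_right1)
    then show ?thesis using assms by linarith
  qed
  then show ?thesis unfolding d by (simp add: field_simps)
qed

lemma pt_pos:
  fixes w t :: real assumes "0 \<le> w" "w \<le> 1" "t > 0"
  shows "w*(1-w)*t/(1+w*t) \<le> t * (w*(1-w))"
    and "t * (w*(1-w)) - t^2 * (w*(1-w)) \<le> w*(1-w)*t/(1+w*t)"
    and "(t/(1+t)) * (w*(1-w)) \<le> w*(1-w)*t/(1+w*t)"
proof -
  define l where "l = w*(1-w)"
  define u where "u = w*t"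
  have l: "l \<ge> 0" using assms by (simp add: l_def)
  have wt: "u \<ge> 0" "u \<le> t" using assms by (auto simp: u_def mult_left_le_one_le)
  have p: "1 + u > 0" using wt by linarith
  define q where "q = t*l"
  have q: "q \<ge> 0" using l assms by (simp add: q_def)
  have qs: "q*u \<ge> 0" using q wt by simp
  have qs2: "q*u \<le> q*t" using q wt by (simp add: mult_left_mono)
  have qts: "q*t*u \<ge> 0" using q wt assms by simp
  have e1: "l*t/(1+u) \<le> q"
    using p qs by (simp add: divide_le_eq q_def algebra_simps)
  have e2: "q - q*t \<le> l*t/(1+u)"
  proof -
    have "(q - q*t)*(1+u) = q + q*u - q*t - q*t*u" by (simp add: algebra_simps)
    also have "\<dots> \<le> q" using qs2 qts by linarith
    finally show ?thesis using p by (simp add: le_divide_eq q_def algebra_simps)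
  qed
  have e3: "(t/(1+t)) * l \<le> l*t/(1+u)"
  proof -
    have "q*(1+u) \<le> q*(1+t)" using qs2 by (simp add: algebra_simps)
    then show ?thesis using p assms by (simp add: divide_le_eq le_divide_eq q_def algebra_simps)
  qed
  show "w*(1-w)*t/(1+w*t) \<le> t * (w*(1-w))" using e1 by (simp add: l_def u_def q_def)
  show "t * (w*(1-w)) - t^2 * (w*(1-w)) \<le> w*(1-w)*t/(1+w*t)" using e2
    by (simp add: l_def u_def q_def power2_eq_square algebra_simps)
  show "(t/(1+t)) * (w*(1-w)) \<le> w*(1-w)*t/(1+w*t)" using e3 by (simp add: l_def u_def)
qed

lemma pt_neg:
  fixes w t :: real assumes "0 \<le> w" "w \<le> 1" "t > -1" "t \<le> 0"
  shows "w*(1-w)*t/(1+w*t) \<le> 0"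
proof -
  have "w*t \<ge> t" using assms by (simp add: mult_le_cancel_right1)
  then have "1 + w*t > 0" using assms by linarith
  moreover have "w*(1-w)*t \<le> 0" using assms by (simp add: mult_nonneg_nonpos)
  ultimately show ?thesis by (simp add: divide_nonpos_pos)
qed


lemma F_bound:
  fixes y \<xi> :: real assumes "0 \<le> y" "y \<le> 1" "\<xi> > 0"
  shows "\<bar>\<xi> * y / (1 - y + \<xi> * y)\<bar> \<le> 1"
proof (cases "y = 0")
  case True then show ?thesis by simp
next
  case False
  then have "\<xi>*y > 0" using assms by simp
  then have d: "1 - y + \<xi>*y > 0" "\<xi>*y \<le> 1 - y + \<xi>*y" using assms by linarith+
  then show ?thesis using \<open>\<xi>*y > 0\<close> by (simp add: divide_le_eq)
qed

theorem lemma5p1: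
  fixes W :: "real \<Rightarrow> real \<Rightarrow> real"
  assumes "graphon W"
    and "sq_int (\<lambda>x y. W x y * (1 - W x y)) \<noteq> 0"
  shows "\<exists>C \<delta>0. \<delta>0 > 0 \<and>
    (\<forall>\<delta> \<xi>. 0 < \<delta> \<and> \<delta> < \<delta>0 \<and> 0 < \<xi> \<and>
       sq_int (\<lambda>x y. \<xi> * W x y / (1 - W x y + \<xi> * W x y)) = sq_int W + \<delta> \<longrightarrow>
       (\<forall>x\<in>{0..1}. \<forall>y\<in>{0..1}.
          \<bar>W x y * \<xi> / (1 - W x y + W x y * \<xi>) - W x y
             - \<delta> * (W x y * (1 - W x y)) / sq_int (\<lambda>x y. W x y * (1 - W x y))\<bar>
          \<le> C * \<delta>\<^sup>2))"
proof -
  let ?w = "\<lambda>p. W (fst p) (snd p)"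
  let ?l = "\<lambda>p. ?w p * (1 - ?w p)"
  define L where "L = sq_int (\<lambda>x y. W x y * (1 - W x y))"
  have L_def': "L = (LINT p:unit_sq|lebesgue. ?l p)" unfolding L_def sq_int_def by simp
  have wb: "0 \<le> ?w p" "?w p \<le> 1" if "p \<in> unit_sq" for p
    using assms(1) that by (auto simp: graphon_def unit_sq_def mem_Times_iff)
  have wb': "0 \<le> W x y" "W x y \<le> 1" if "x \<in> {0..1}" "y \<in> {0..1}" for x y
    using assms(1) that by (auto simp: graphon_def)
  have iW: "set_integrable lebesgue unit_sq (\<lambda>p. ?w p)"
    using comp_integrable[OF assms(1), of "\<lambda>y. y" 1] by simp
  have iL: "set_integrable lebesgue unit_sq ?l"
  proof (rule comp_integrable[OF assms(1), of "\<lambda>y. y * (1 - y)" 1])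
    fix y :: real assume "0 \<le> y" "y \<le> 1"
    then show "\<bar>y * (1 - y)\<bar> \<le> 1" by (simp add: mult_le_one)
  qed simp_all
  have i0: "set_integrable lebesgue unit_sq (\<lambda>p. 0::real)"
    using comp_integrable[OF assms(1), of "\<lambda>y. 0" 1] by simp
  have int0: "(LINT p:unit_sq|lebesgue. (0::real)) = 0"
    by (simp add: set_lebesgue_integral_def)
  have "0 \<le> L" unfolding L_def'
    using set_integral_mono[OF i0 iL] wb int0 by (simp add: mult_nonneg_nonneg)
  with assms(2) have Lpos: "L > 0" unfolding L_def by simp
  show ?thesis
  proof (intro exI conjI allI impI)
    show "L/2 > 0" using Lpos by simp
    fix \<delta> \<xi> :: real
    assume H: "0 < \<delta> \<and> \<delta> < L/2 \<and> 0 < \<xi> \<and>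
       sq_int (\<lambda>x y. \<xi> * W x y / (1 - W x y + \<xi> * W x y)) = sq_int W + \<delta>"
    then have d0: "0 < \<delta>" and dL: "\<delta> < L/2" and x0: "0 < \<xi>" by auto
    let ?F = "\<lambda>p. \<xi> * ?w p / (1 - ?w p + \<xi> * ?w p)"
    have iF: "set_integrable lebesgue unit_sq ?F"
    proof (rule comp_integrable[OF assms(1), of "\<lambda>y. \<xi> * y / (1 - y + \<xi> * y)" 1])
      fix y :: real assume "0 \<le> y" "y \<le> 1"
      then show "\<bar>\<xi> * y / (1 - y + \<xi> * y)\<bar> \<le> 1" using F_bound x0 by blast
    qed simp_all
    have iG: "set_integrable lebesgue unit_sq (\<lambda>p. ?F p - ?w p)"
      by (rule set_integral_diff(1)[OF iF iW])
    have hD: "\<delta> = (LINT p:unit_sq|lebesgue. ?F p - ?w p)"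
      using H set_integral_diff(2)[OF iF iW] unfolding sq_int_def by simp
    define t where "t = \<xi> - 1"
    have xt: "\<xi> = 1 + t" unfolding t_def by simp
    have t1: "t > -1" using x0 unfolding t_def by simp
    have peq: "?F p - ?w p = ?l p * t / (1 + ?w p * t)" if "p \<in> unit_sq" for p
      using pt_eq[OF wb[OF that] t1] unfolding xt .
    have tpos: "t > 0"
    proof (rule ccontr)
      assume "\<not> t > 0"
      then have "t \<le> 0" by simp
      have "(LINT p:unit_sq|lebesgue. ?F p - ?w p) \<le> (LINT p:unit_sq|lebesgue. (0::real))"
        using set_integral_mono[OF iG i0] peq wb pt_neg[OF _ _ t1 \<open>t \<le> 0\<close>] by simp
      then show False using hD int0 d0 by simp
    qed
    have a1: "\<delta> \<le> t * L"
    proof -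
      have "(LINT p:unit_sq|lebesgue. ?F p - ?w p) \<le> (LINT p:unit_sq|lebesgue. t * ?l p)"
        using set_integral_mono[OF iG set_integrable_mult_right[OF iL, of t]]
          peq wb pt_pos(1)[OF _ _ tpos] by simp
      then show ?thesis using hD L_def' by simp
    qed
    have a2: "t * L - t^2 * L \<le> \<delta>"
    proof -
      have i2: "set_integrable lebesgue unit_sq (\<lambda>p. t * ?l p - t^2 * ?l p)"
        using set_integral_diff(1)[OF set_integrable_mult_right[OF iL, of t]
              set_integrable_mult_right[OF iL, of "t^2"]] .
      have "(LINT p:unit_sq|lebesgue. t * ?l p - t^2 * ?l p) \<le> (LINT p:unit_sq|lebesgue. ?F p - ?w p)"
        using set_integral_mono[OF i2 iG] peq wb pt_pos(2)[OF _ _ tpos] by simp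
      moreover have "(LINT p:unit_sq|lebesgue. t * ?l p - t^2 * ?l p) = t * L - t^2 * L"
        using set_integral_diff(2)[OF set_integrable_mult_right[OF iL, of t]
              set_integrable_mult_right[OF iL, of "t^2"]] L_def' by simp
      ultimately show ?thesis using hD by simp
    qed
    have a3: "(t/(1+t)) * L \<le> \<delta>"
    proof -
      have "(LINT p:unit_sq|lebesgue. (t/(1+t)) * ?l p) \<le> (LINT p:unit_sq|lebesgue. ?F p - ?w p)"
        using set_integral_mono[OF set_integrable_mult_right[OF iL, of "t/(1+t)"] iG]
          peq wb pt_pos(3)[OF _ _ tpos] by simp
      then show ?thesis using hD L_def' by simp
    qed
    have tb: "t * L \<le> 2 * \<delta>"
    proof -
      have "t * L \<le> \<delta> * (1 + t)" using a3 tpos by (simp add: divide_le_eq mult.commute)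
      moreover have "\<delta> * t \<le> (L/2) * t" using dL tpos by (simp add: mult_right_mono)
      ultimately show ?thesis by (simp add: algebra_simps)
    qed
    have tb2: "t \<le> 2 * \<delta> / L" using tb Lpos by (simp add: le_divide_eq)
    have t2: "t^2 \<le> (4 / L^2) * \<delta>^2"
    proof -
      have "t^2 \<le> (2 * \<delta> / L)^2" using power_mono[OF tb2, of 2] tpos by simp
      then show ?thesis by (simp add: power_divide power_mult_distrib)
    qed
    define r where "r = \<delta> / L"
    have r1: "t - t^2 \<le> r" using a2 Lpos unfolding r_def by (simp add: le_divide_eq algebra_simps)
    have r2: "r \<le> t" using a1 Lpos unfolding r_def by (simp add: divide_le_eq algebra_simps)
    show "\<forall>x\<in>{0..1}. \<forall>y\<in>{0..1}.
          \<bar>W x y * \<xi> / (1 - W x y + W x y * \<xi>) - W x y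
             - \<delta> * (W x y * (1 - W x y)) / sq_int (\<lambda>x y. W x y * (1 - W x y))\<bar>
          \<le> 4 / L^2 * \<delta>\<^sup>2"
    proof (intro ballI)
      fix x y :: real assume xy: "x \<in> {0..1}" "y \<in> {0..1}"
      define v where "v = W x y"
      have v: "0 \<le> v" "v \<le> 1" using wb'[OF xy] unfolding v_def by auto
      define lv where "lv = v * (1 - v)"
      have lv: "0 \<le> lv" "lv \<le> 1" using v unfolding lv_def by (auto simp: mult_le_one)
      define g where "g = lv * t / (1 + v * t)"
      have geq: "W x y * \<xi> / (1 - W x y + W x y * \<xi>) - W x y = g"
        using pt_eq[OF v t1] unfolding g_def lv_def v_def xt by (simp add: mult.commute)
      have g1: "g \<le> t * lv" and g2: "t * lv - t^2 * lv \<le> g"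
        using pt_pos(1,2)[OF v tpos] unfolding g_def lv_def by auto
      have rl1: "(t - t^2) * lv \<le> r * lv" using r1 lv by (simp add: mult_right_mono)
      have rl2: "r * lv \<le> t * lv" using r2 lv by (simp add: mult_right_mono)
      have eqd: "\<delta> * (W x y * (1 - W x y)) / sq_int (\<lambda>x y. W x y * (1 - W x y)) = r * lv"
        unfolding r_def lv_def v_def L_def by simp
      have "\<bar>g - r * lv\<bar> \<le> t^2 * lv" using g1 g2 rl1 rl2 by (simp add: algebra_simps abs_le_iff)
      also have "\<dots> \<le> t^2" using lv mult_left_mono[of lv 1 "t^2"] by simp
      also have "\<dots> \<le> 4 / L^2 * \<delta>\<^sup>2" using t2 by simp
      finally show "\<bar>W x y * \<xi> / (1 - W x y + W x y * \<xi>) - W x y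
             - \<delta> * (W x y * (1 - W x y)) / sq_int (\<lambda>x y. W x y * (1 - W x y))\<bar>
          \<le> 4 / L^2 * \<delta>\<^sup>2" unfolding geq eqd .
    qed
  qed
qed

end
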